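(* Let $m\ge1$, $n\ge1$, fix $t_0\in\mathbb{Z}^m$ and let $\mathcal{Z}=\{t\in\mathbb{Z}^m\mid t\ge t_0\}$. Let $T=(T_1,\dots,T_m)\in\mathbb{N}^m$, $T\ne0$. Let $A_\alpha\colon\mathcal{Z}\to\mathcal{M}_n(\mathbb{C})$, $\alpha\in\{1,\dots,m\}$, satisfy $$A_\alpha(t+1_\beta)A_\beta(t)=A_\beta(t+1_\alpha)A_\alpha(t),\quad \forall t\in\mathcal{Z},\ \forall\alpha,\beta,$$ and suppose that for all $\alpha,\beta$ and all $t\in\mathcal{Z}$, $A_\alpha(t+T_\beta\cdot1_\beta)=A_\alpha(t)$ and $A_\alpha(t)$ is invertible. Let $\Phi(t)=\chi(t,t_0)$, $t\in\mathcal{Z}$. Assume one of: (i) $n=2$; or (ii) for all $\alpha$ and all $t\in\mathcal{Z}$ the matrix $A_\alpha(t)$ is Hermitian, and $A_\alpha(t)A_\alpha(t+k\cdot1_\alpha)=A_\alpha(t+k\cdot1_\alpha)A_\alpha(t)$ for all $t\in\mathcal{Z}$, $k\in\mathbb{N}$, $\alpha\in\{1,\dots,m\}$. Then there exist a function $P\colon\mathcal{Z}\to\mathcal{M}_n(\mathbb{C})$ and constant invertible matrices $B_1,\dots,B_m\in\mathcal{M}_n(\mathbb{C})$ such that (a) $P(t+T_\alpha\cdot1_\alpha)=P(t)$ for all $t\in\mathcal{Z}$ and all $\alpha$; (b) $B_\alpha B_\beta=B_\beta B_\alpha$ for all $\alpha,\beta$; (c) $\Phi(t)=P(t)B_1^{t^1}B_2^{t^2}\cdots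 B_m^{t^m}$ for all $t\ge t_0$.
   Context: $\mathbb{N}=\{0,1,2,\dots\}$; $1_\alpha\in\mathbb{Z}^m$ has $1$ in position $\alpha$ and $0$ elsewhere; $s\le t$ in $\mathbb{Z}^m$ means $s^\alpha\le t^\alpha$ for all $\alpha$; $t=(t^1,\dots,t^m)$. Under the compatibility relations, for each $s\in\mathcal{Z}$ there is a unique $\chi(\cdot,s)\colon\{t\in\mathcal{Z}\mid t\ge s\}\to\mathcal{M}_n(\mathbb{C})$ with $\chi(s,s)=I_n$ and $\chi(t+1_\alpha,s)=A_\alpha(t)\chi(t,s)$ for all $t\ge s$ and all $\alpha$ (the transition matrix). Negative integer powers of invertible matrices are powers of the inverse. *)

theory Defs
  imports Complex_Main "Jordan_Normal_Form.Matrix"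
begin

text \<open>Points of Z^m are functions nat => int; only coordinates 0..m-1 are used
  (indices are 0-based); all points of the domain are zero outside {0..<m}.\<close>

definition domZ :: "nat \<Rightarrow> (nat \<Rightarrow> int) \<Rightarrow> (nat \<Rightarrow> int) set" where
  "domZ m t0 = {t. (\<forall>a<m. t0 a \<le> t a) \<and> (\<forall>a\<ge>m. t a = 0)}"

definition shift :: "(nat \<Rightarrow> int) \<Rightarrow> nat \<Rightarrow> int \<Rightarrow> (nat \<Rightarrow> int)" where
  "shift t a k = t(a := t a + k)"

definition hermitian_mat :: "complex mat \<Rightarrow> bool" where
  "hermitian_mat A \<longleftrightarrow> dim_row A = dim_col A \<and>
     (\<forall>i<dim_row A. \<forall>j<dim_col A. A $$ (i, j) = cnj (A $$ (j, i)))"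

definition mat_inv :: "complex mat \<Rightarrow> complex mat" where
  "mat_inv B = (SOME C. C \<in> carrier_mat (dim_row B) (dim_row B) \<and>
      B * C = 1\<^sub>m (dim_row B) \<and> C * B = 1\<^sub>m (dim_row B))"

definition mpow_int :: "complex mat \<Rightarrow> int \<Rightarrow> complex mat" where
  "mpow_int B k = (if 0 \<le> k then B ^\<^sub>m nat k else mat_inv B ^\<^sub>m nat (- k))"

fun prod_pows :: "nat \<Rightarrow> (nat \<Rightarrow> complex mat) \<Rightarrow> (nat \<Rightarrow> int) \<Rightarrow> nat \<Rightarrow> complex mat" where
  "prod_pows n B t 0 = 1\<^sub>m n"
| "prod_pows n B t (Suc k) = prod_pows n B t k * mpow_int (B k) (t k)"

end

theory Submission imports Defs "Jordan_Normal_Form.Schur_Decomposition" "HOL-Computational_Algebra.Fundamental_Theorem_Algebra"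
begin


lemma binom2_ex:
  fixes a b :: "'a::comm_ring_1"
  shows "\<exists>h. (a+b)^Suc k = a^Suc k + of_nat (Suc k) * a^k * b + b^2 * h"
proof (induction k)
  case 0
  show ?case by (rule exI[of _ 0]) simp
next
  case (Suc k)
  then obtain h where h: "(a+b)^Suc k = a^Suc k + of_nat (Suc k) * a^k * b + b^2 * h" by blast
  have "(a+b)^Suc (Suc k) = (a+b) * (a^Suc k + of_nat (Suc k) * a^k * b + b^2 * h)"
    using h by simp
  also have "\<dots> = a^Suc (Suc k) + of_nat (Suc (Suc k)) * a^Suc k * b
      + b^2 * (a*h + of_nat (Suc k) * a^k + b*h)"
    by (simp add: algebra_simps power2_eq_square)
  finally show ?case by blast
qed

lemma cnth_root: "k > 0 \<Longrightarrow> \<exists>y::complex. y ^ k = x"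
  by (rule nth_root_exists)

lemma poly_root_exists:
  fixes es :: "complex list"
  assumes nz: "\<forall>e\<in>set es. e \<noteq> 0" and k: "k > 0"
  shows "\<exists>p. (\<Prod>e\<leftarrow>es. [:-e,1:]) dvd p^k - [:0,1:]"
  using nz
proof (induction es)
  case Nil
  show ?case by simp
next
  case (Cons e es)
  then obtain p where "(\<Prod>e\<leftarrow>es. [:-e,1:]) dvd p^k - [:0,1:]" by auto
  define g where "g = (\<Prod>e\<leftarrow>es. [:-e,1:])"
  then obtain r where r: "p^k - [:0,1:] = g * r" using \<open>_ dvd _\<close> by (auto elim: dvdE)
  have e0: "e \<noteq> 0" using Cons by auto
  obtain k' where kk: "k = Suc k'" using k by (cases k) auto
  have main: "\<exists>p'. [:-e,1:] * g dvd p'^k - [:0,1:]"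
  proof -
    have gen: "[:-e,1:] * g dvd (p + [:c:]*g)^k - [:0,1:]"
      if H: "\<And>w. (p + [:c:]*g)^k - [:0,1:] = g * w \<Longrightarrow> poly w e = 0" for c
    proof -
      obtain h where h: "(p + [:c:]*g)^Suc k' = p^Suc k' + of_nat (Suc k') * p^k' * ([:c:]*g) + ([:c:]*g)^2 * h"
        using binom2_ex by blast
      define w where "w = r + of_nat k * p^k' * [:c:] + g * [:c:]^2 * h"
      have weq: "(p + [:c:]*g)^k - [:0,1:] = g * w"
        unfolding w_def kk using h r[unfolded kk] by (simp add: algebra_simps power2_eq_square)
      have "poly w e = 0" using H[OF weq] .
      then have "[:-e,1:] dvd w" by (simp add: poly_eq_0_iff_dvd)
      then show ?thesis unfolding weq by (metis dvd_refl mult.commute mult_dvd_mono)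
    qed
    show ?thesis
    proof (cases "poly g e = 0")
      case True
      have pe: "poly p e ^ k = e" using arg_cong[OF r, of "\<lambda>q. poly q e"] True by simp
      hence pe0: "poly p e \<noteq> 0" using e0 k by auto
      define c where "c = - poly r e / (of_nat k * poly p e ^ k')"
      have "[:-e,1:] * g dvd (p + [:c:]*g)^k - [:0,1:]"
      proof (rule gen)
        fix w assume W: "(p + [:c:]*g)^k - [:0,1:] = g * w"
        obtain h where h: "(p + [:c:]*g)^Suc k' = p^Suc k' + of_nat (Suc k') * p^k' * ([:c:]*g) + ([:c:]*g)^2 * h"
          using binom2_ex by blast
        have "g * w = g * (r + of_nat k * p^k' * [:c:] + g * [:c:]^2 * h)"
          using W[symmetric] h r unfolding kk by (simp add: algebra_simps power2_eq_square)
        moreover have "g \<noteq> 0" unfolding g_def by (auto simp: prod_list_zero_iff)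
        ultimately have "w = r + of_nat k * p^k' * [:c:] + g * [:c:]^2 * h" by simp
        then have "poly w e = poly r e + of_nat k * poly p e ^ k' * c"
          using True by simp
        also have "\<dots> = 0" unfolding c_def using pe0 k by (simp add: field_simps)
        finally show "poly w e = 0" .
      qed
      then show ?thesis by blast
    next
      case False
      obtain \<mu> where mu: "\<mu> ^ k = e" using cnth_root[OF k] by blast
      define c where "c = (\<mu> - poly p e) / poly g e"
      have "[:-e,1:] * g dvd (p + [:c:]*g)^k - [:0,1:]"
      proof (rule gen)
        fix w assume W: "(p + [:c:]*g)^k - [:0,1:] = g * w"
        have "poly (p + [:c:]*g) e = \<mu>" unfolding c_def using False by simp
        then have "poly ((p + [:c:]*g)^k - [:0,1:]) e = 0" using mu by (simp)
        then have "poly g e * poly w e = 0" unfolding W by simp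
        then show "poly w e = 0" using False by simp
      qed
      then show ?thesis by blast
    qed
  qed
  then show ?case unfolding g_def by simp
qed



definition mpoly :: "nat \<Rightarrow> complex mat \<Rightarrow> complex poly \<Rightarrow> complex mat" where
  "mpoly n C p = fold_coeffs (\<lambda>a M. a \<cdot>\<^sub>m 1\<^sub>m n + C * M) p (0\<^sub>m n n)"

lemma mpoly_0[simp]: "mpoly n C 0 = 0\<^sub>m n n"
  by (simp add: mpoly_def)

lemma mpoly_pCons:
  assumes C: "C \<in> carrier_mat n n"
  shows "mpoly n C (pCons a p) = a \<cdot>\<^sub>m 1\<^sub>m n + C * mpoly n C p"
proof (cases "a = 0 \<and> p = 0")
  case True
  then show ?thesis using C by (auto intro!: eq_matI)
next
  case False
  then show ?thesis unfolding mpoly_def by (cases "a = 0") auto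
qed

lemma mpoly_carrier[simp,intro]:
  assumes C: "C \<in> carrier_mat n n"
  shows "mpoly n C p \<in> carrier_mat n n"
proof (induction p)
  case 0 show ?case by simp
next
  case (pCons a p)
  then show ?case using C by (simp add: mpoly_pCons)
qed

lemma mpoly_dim[simp]:
  "C \<in> carrier_mat n n \<Longrightarrow> dim_row (mpoly n C p) = n"
  "C \<in> carrier_mat n n \<Longrightarrow> dim_col (mpoly n C p) = n"
  by (metis carrier_matD mpoly_carrier)+

lemma mpoly_add:
  assumes C: "C \<in> carrier_mat n n"
  shows "mpoly n C (p + q) = mpoly n C p + mpoly n C q"
proof (induction p arbitrary: q)
  case 0
  show ?case using C by (auto intro!: eq_matI)
next
  case (pCons a p)
  show ?case
  proof (cases q rule: pCons_cases)
    case (pCons b q')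
    have "mpoly n C (pCons a p + q) = (a + b) \<cdot>\<^sub>m 1\<^sub>m n + C * (mpoly n C p + mpoly n C q')"
      using pCons.IH C unfolding pCons by (simp add: mpoly_pCons)
    also have "\<dots> = (a \<cdot>\<^sub>m 1\<^sub>m n + C * mpoly n C p) + (b \<cdot>\<^sub>m 1\<^sub>m n + C * mpoly n C q')"
    proof -
      have d: "C * (mpoly n C p + mpoly n C q') = C * mpoly n C p + C * mpoly n C q'"
        by (rule mult_add_distrib_mat[OF C]) (use C in auto)
      show ?thesis unfolding d using C by (intro eq_matI) (auto simp: algebra_simps)
    qed
    finally show ?thesis using C unfolding pCons by (simp add: mpoly_pCons)
  qed
qed

lemma mpoly_smult:
  assumes C: "C \<in> carrier_mat n n"
  shows "mpoly n C (smult c p) = c \<cdot>\<^sub>m mpoly n C p"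
proof (induction p)
  case 0 show ?case by (auto intro!: eq_matI)
next
  case (pCons a p)
  have "mpoly n C (smult c (pCons a p)) = (c*a) \<cdot>\<^sub>m 1\<^sub>m n + C * (c \<cdot>\<^sub>m mpoly n C p)"
    using pCons C by (simp add: mpoly_pCons)
  also have "C * (c \<cdot>\<^sub>m mpoly n C p) = c \<cdot>\<^sub>m (C * mpoly n C p)"
    by (rule mult_smult_distrib[OF C]) (use C in auto)
  finally show ?case using C by (simp add: mpoly_pCons) (intro eq_matI, auto simp: algebra_simps)
qed

lemma mpoly_mult:
  assumes C: "C \<in> carrier_mat n n"
  shows "mpoly n C (p * q) = mpoly n C p * mpoly n C q"
proof (induction p)
  case 0 show ?case using C by simp
next
  case (pCons a p)
  let ?P = "mpoly n C p" and ?Q = "mpoly n C q"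
  have cP: "?P \<in> carrier_mat n n" and cQ: "?Q \<in> carrier_mat n n" using C by auto
  have "mpoly n C (pCons a p * q) = a \<cdot>\<^sub>m ?Q + (0 \<cdot>\<^sub>m 1\<^sub>m n + C * (?P * ?Q))"
    using pCons C by (simp add: mpoly_add mpoly_smult mpoly_pCons)
  also have "C * (?P * ?Q) = C * ?P * ?Q" by (rule assoc_mult_mat[symmetric]) (use C cP cQ in auto)
  also have "a \<cdot>\<^sub>m ?Q = (a \<cdot>\<^sub>m 1\<^sub>m n) * ?Q" using cQ by (simp add: mult_smult_assoc_mat[of _ n n])
  finally have "mpoly n C (pCons a p * q) = (a \<cdot>\<^sub>m 1\<^sub>m n) * ?Q + (0 \<cdot>\<^sub>m 1\<^sub>m n + C * ?P * ?Q)" .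
  also have "\<dots> = (a \<cdot>\<^sub>m 1\<^sub>m n) * ?Q + C * ?P * ?Q"
    using C cP cQ by (intro eq_matI) auto
  also have "\<dots> = (a \<cdot>\<^sub>m 1\<^sub>m n + C * ?P) * ?Q"
    by (rule add_mult_distrib_mat[symmetric]) (use C cP cQ in auto)
  finally show ?case using C by (simp add: mpoly_pCons)
qed

lemma mpoly_const[simp]:
  assumes C: "C \<in> carrier_mat n n"
  shows "mpoly n C [:c:] = c \<cdot>\<^sub>m 1\<^sub>m n"
  using C by (simp add: mpoly_pCons)

lemma mpoly_one[simp]:
  assumes C: "C \<in> carrier_mat n n"
  shows "mpoly n C 1 = 1\<^sub>m n"
  using mpoly_const[OF C, of 1] by (simp add: one_pCons) (intro eq_matI, auto)

lemma mpoly_x[simp]: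
  assumes C: "C \<in> carrier_mat n n"
  shows "mpoly n C [:0,1:] = C"
  using C by (simp add: mpoly_pCons) (intro eq_matI, auto)

lemma mpoly_power:
  assumes C: "C \<in> carrier_mat n n"
  shows "mpoly n C (p ^ k) = mpoly n C p ^\<^sub>m k"
proof (induction k)
  case 0 show ?case using C by simp
next
  case (Suc k)
  have "mpoly n C (p ^ Suc k) = mpoly n C (p ^ k * p)" by (simp only: power_Suc2)
  also have "\<dots> = mpoly n C (p ^ k) * mpoly n C p" by (rule mpoly_mult[OF C])
  finally show ?case using Suc by simp
qed

lemma mpoly_commute:
  assumes C: "C \<in> carrier_mat n n" and X: "X \<in> carrier_mat n n" and XC: "X * C = C * X"
  shows "X * mpoly n C p = mpoly n C p * X"
proof (induction p)
  case 0 show ?case using X by simp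
next
  case (pCons a p)
  let ?P = "mpoly n C p"
  have cP: "?P \<in> carrier_mat n n" using C by auto
  have "X * (a \<cdot>\<^sub>m 1\<^sub>m n + C * ?P) = X * (a \<cdot>\<^sub>m 1\<^sub>m n) + X * (C * ?P)"
    by (rule mult_add_distrib_mat[OF X]) (use C cP in auto)
  also have "X * (a \<cdot>\<^sub>m 1\<^sub>m n) = (a \<cdot>\<^sub>m 1\<^sub>m n) * X"
  proof -
    have 1: "X * (a \<cdot>\<^sub>m 1\<^sub>m n) = a \<cdot>\<^sub>m X"
      using mult_smult_distrib[OF X one_carrier_mat[of n], of a] right_mult_one_mat[OF X] by simp
    have 2: "(a \<cdot>\<^sub>m 1\<^sub>m n) * X = a \<cdot>\<^sub>m X"
      using mult_smult_assoc_mat[OF one_carrier_mat[of n] X, of a] left_mult_one_mat[OF X] by simp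
    show ?thesis using 1 2 by simp
  qed
  also have "X * (C * ?P) = (X * C) * ?P" by (rule assoc_mult_mat[symmetric]) (use X C cP in auto)
  also have "\<dots> = C * (X * ?P)" unfolding XC by (rule assoc_mult_mat) (use X C cP in auto)
  also have "\<dots> = (C * ?P) * X" unfolding pCons by (rule assoc_mult_mat[symmetric]) (use X C cP in auto)
  also have "(a \<cdot>\<^sub>m 1\<^sub>m n) * X + C * ?P * X = (a \<cdot>\<^sub>m 1\<^sub>m n + C * ?P) * X"
    by (rule add_mult_distrib_mat[symmetric]) (use C cP X in auto)
  finally show ?case using C by (simp add: mpoly_pCons)
qed



lemma mult_entry:
  assumes "A \<in> carrier_mat n n" "B \<in> carrier_mat n n" "i < n" "j < n"
  shows "(A * B) $$ (i,j) = (\<Sum>r<n. A $$ (i,r) * B $$ (r,j))"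
  using assms by (auto simp: scalar_prod_def lessThan_atLeast0 intro!: sum.cong)

lemma mpoly_lin_entry:
  assumes U: "U \<in> carrier_mat n n" and "r < n" "l < n"
  shows "mpoly n U [:-e,1:] $$ (r,l) = U $$ (r,l) - (if r = l then e else 0)"
proof -
  have "mpoly n U [:-e,1:] = (-e) \<cdot>\<^sub>m 1\<^sub>m n + U * mpoly n U [:1:]"
    by (rule mpoly_pCons[OF U])
  also have "mpoly n U [:1:] = 1\<^sub>m n" using mpoly_one[OF U] by (simp add: one_pCons)
  finally show ?thesis using assms U by simp
qed

lemma triangular_annihilate:
  assumes U: "U \<in> carrier_mat n n" and ut: "upper_triangular U"
  shows "mpoly n U (\<Prod>e\<leftarrow>diag_mat U. [:-e,1:]) = 0\<^sub>m n n"
proof -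
  define es where "es = diag_mat U"
  have les: "length es = n" using U unfolding es_def diag_mat_def by auto
  have esj: "\<And>j. j < n \<Longrightarrow> es ! j = U $$ (j,j)" using U unfolding es_def diag_mat_def by auto
  have utz: "\<And>i j. i < n \<Longrightarrow> j < i \<Longrightarrow> U $$ (i,j) = 0" using ut U unfolding upper_triangular_def by auto
  have claim: "\<forall>s<n. \<forall>l<j. mpoly n U (\<Prod>e\<leftarrow>take j es. [:-e,1:]) $$ (s,l) = 0" if "j \<le> n" for j
    using that
  proof (induction j)
    case 0 show ?case by simp
  next
    case (Suc j)
    have jn: "j < n" using Suc by auto
    let ?M = "mpoly n U (\<Prod>e\<leftarrow>take j es. [:-e,1:])"
    let ?D = "mpoly n U [:-(es!j),1:]"
    have tk: "take (Suc j) es = take j es @ [es ! j]" using jn les by (simp add: take_Suc_conv_app_nth)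
    have pe: "(\<Prod>e\<leftarrow>take (Suc j) es. [:-e,1:]) = (\<Prod>e\<leftarrow>take j es. [:-e,1:]) * [:-(es!j),1:]"
      unfolding tk by simp
    have eq: "mpoly n U (\<Prod>e\<leftarrow>take (Suc j) es. [:-e,1:]) = ?M * ?D"
      unfolding pe by (rule mpoly_mult[OF U])
    have IH: "\<forall>s<n. \<forall>l<j. ?M $$ (s,l) = 0" using Suc by auto
    show ?case
    proof (intro allI impI)
      fix s l assume s: "s < n" and l: "l < Suc j"
      have "(?M * ?D) $$ (s,l) = (\<Sum>r<n. ?M $$ (s,r) * ?D $$ (r,l))"
        by (rule mult_entry) (use U s l jn in auto)
      also have "\<dots> = 0"
      proof (rule sum.neutral, intro ballI)
        fix r assume r: "r \<in> {..<n}"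
        show "?M $$ (s,r) * ?D $$ (r,l) = 0"
        proof (cases "r < j")
          case True then show ?thesis using IH s by simp
        next
          case False
          have "?D $$ (r,l) = U $$ (r,l) - (if r = l then es!j else 0)"
            by (rule mpoly_lin_entry) (use U r l jn in auto)
          also have "\<dots> = 0"
          proof (cases "r = l")
            case True
            then have "r = j" using False l by auto
            then show ?thesis using True esj jn by simp
          next
            case False2: False
            then have "l < r" using False l by auto
            then show ?thesis using utz r False2 by auto
          qed
          finally show ?thesis by simp
        qed
      qed
      finally show "mpoly n U (\<Prod>e\<leftarrow>take (Suc j) es. [:-e,1:]) $$ (s,l) = 0" unfolding eq .
    qed
  qed
  have "take n es = es" using les by simp
  then have "\<forall>s<n. \<forall>l<n. mpoly n U (\<Prod>e\<leftarrow>es. [:-e,1:]) $$ (s,l) = 0" using claim[of n] by simp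
  then show ?thesis unfolding es_def[symmetric] using U by (intro eq_matI) auto
qed

lemma massoc: "A \<in> carrier_mat n n \<Longrightarrow> B \<in> carrier_mat n n \<Longrightarrow> C \<in> carrier_mat n n \<Longrightarrow>
  A * B * C = A * (B * C)"
  by (rule assoc_mult_mat)

lemma mpoly_similar:
  assumes U: "U \<in> carrier_mat n n" and P: "P \<in> carrier_mat n n" and Q: "Q \<in> carrier_mat n n"
    and PQ: "P * Q = 1\<^sub>m n" and QP: "Q * P = 1\<^sub>m n"
  shows "mpoly n (P * U * Q) f = P * mpoly n U f * Q"
proof -
  have C: "P * U * Q \<in> carrier_mat n n" using U P Q by auto
  show ?thesis
  proof (induction f)
    case 0 show ?case using P Q by simp
  next
    case (pCons a f)
    let ?M = "mpoly n U f"
    have M: "?M \<in> carrier_mat n n" using U by auto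
    have PU: "P * U \<in> carrier_mat n n" and MQ: "?M * Q \<in> carrier_mat n n" using P U M Q by auto
    have "P * U * Q * (P * (?M * Q)) = (P * U) * (Q * (P * (?M * Q)))"
      by (rule massoc[OF PU Q]) (use P M Q in auto)
    also have "Q * (P * (?M * Q)) = (Q * P) * (?M * Q)" by (rule massoc[OF Q P MQ, symmetric])
    also have "(Q * P) * (?M * Q) = ?M * Q" unfolding QP by (rule left_mult_one_mat[OF MQ])
    also have "(P * U) * (?M * Q) = (P * U) * ?M * Q" by (rule massoc[OF PU M Q, symmetric])
    also have "(P * U) * ?M = P * (U * ?M)" by (rule massoc[OF P U M])
    finally have 1: "P * U * Q * (P * ?M * Q) = P * (U * ?M) * Q" using massoc[OF P M Q] by simp
    have 2: "a \<cdot>\<^sub>m 1\<^sub>m n = P * (a \<cdot>\<^sub>m 1\<^sub>m n) * Q"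
    proof -
      have "P * (a \<cdot>\<^sub>m 1\<^sub>m n) = a \<cdot>\<^sub>m P"
        using mult_smult_distrib[OF P one_carrier_mat[of n], of a] right_mult_one_mat[OF P] by simp
      then have "P * (a \<cdot>\<^sub>m 1\<^sub>m n) * Q = a \<cdot>\<^sub>m (P * Q)"
        using mult_smult_assoc_mat[OF P Q] by simp
      then show ?thesis unfolding PQ by simp
    qed
    have "mpoly n (P * U * Q) (pCons a f) = a \<cdot>\<^sub>m 1\<^sub>m n + P * U * Q * (P * ?M * Q)"
      using pCons C by (simp add: mpoly_pCons)
    also have "\<dots> = P * (a \<cdot>\<^sub>m 1\<^sub>m n) * Q + P * (U * ?M) * Q" using 1 2 by simp
    also have "\<dots> = (P * (a \<cdot>\<^sub>m 1\<^sub>m n) + P * (U * ?M)) * Q"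
      by (rule add_mult_distrib_mat[symmetric]) (use P Q U M in auto)
    also have "P * (a \<cdot>\<^sub>m 1\<^sub>m n) + P * (U * ?M) = P * (a \<cdot>\<^sub>m 1\<^sub>m n + U * ?M)"
      by (rule mult_add_distrib_mat[symmetric]) (use P Q U M in auto)
    finally show ?case using U by (simp add: mpoly_pCons)
  qed
qed



lemma invertible_carrier_inv:
  assumes C: "C \<in> carrier_mat n n" and inv: "invertible_mat C"
  shows "\<exists>B. B \<in> carrier_mat n n \<and> C * B = 1\<^sub>m n \<and> B * C = 1\<^sub>m n"
proof -
  from inv obtain B where 1: "C * B = 1\<^sub>m (dim_row C)" and 2: "B * C = 1\<^sub>m (dim_row B)"
    unfolding invertible_mat_def inverts_mat_def by blast
  have "dim_col B = n" using arg_cong[OF 1, of dim_col] C by simp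
  moreover have "dim_row B = n" using arg_cong[OF 2, of dim_col] C by simp
  ultimately show ?thesis using 1 2 C by (auto intro: exI[of _ B])
qed

lemma matrix_root:
  assumes C: "C \<in> carrier_mat n n" and inv: "invertible_mat C" and k: "k > 0"
  shows "\<exists>p. mpoly n C p ^\<^sub>m k = C"
proof -
  obtain es where cp: "char_poly C = (\<Prod>a\<leftarrow>es. [:-a,1:])" and les: "length es = n"
    using char_poly_factorized[OF C] by blast
  obtain U P Q where schur: "schur_decomposition C es = (U,P,Q)" by (cases "schur_decomposition C es") auto
  from schur_decomposition[OF C cp schur]
  have sw: "similar_mat_wit C U P Q" and ut: "upper_triangular U" and dg: "diag_mat U = es" by auto
  from sw C have U: "U \<in> carrier_mat n n" and P: "P \<in> carrier_mat n n" and Q: "Q \<in> carrier_mat n n"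
    and PQ: "P * Q = 1\<^sub>m n" and QP: "Q * P = 1\<^sub>m n" and CPUQ: "C = P * U * Q"
    unfolding similar_mat_wit_def Let_def by auto
  have nz: "\<forall>e\<in>set es. e \<noteq> 0"
  proof (rule ccontr)
    assume "\<not> ?thesis"
    then have "0 \<in> set es" by auto
    then have "poly (char_poly C) 0 = 0" unfolding cp by (auto simp: poly_prod_list prod_list_zero_iff)
    then have "eigenvalue C 0" using eigenvalue_root_char_poly[OF C] by simp
    then obtain v where v: "v \<in> carrier_vec n" "v \<noteq> 0\<^sub>v n" "C *\<^sub>v v = 0 \<cdot>\<^sub>v v"
      unfolding eigenvalue_def eigenvector_def using C by auto
    obtain B where B: "B \<in> carrier_mat n n" "B * C = 1\<^sub>m n"
      using invertible_carrier_inv[OF C inv] by blast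
    have "v = (B * C) *\<^sub>v v" using B v by simp
    also have "\<dots> = B *\<^sub>v (C *\<^sub>v v)" by (rule assoc_mult_mat_vec) (use B C v in auto)
    also have "C *\<^sub>v v = 0\<^sub>v n" using v by (auto intro!: eq_vecI)
    also have "B *\<^sub>v 0\<^sub>v n = 0\<^sub>v n" using B by (auto intro!: eq_vecI)
    finally show False using v by simp
  qed
  obtain p where "(\<Prod>e\<leftarrow>es. [:-e,1:]) dvd p^k - [:0,1:]" using poly_root_exists[OF nz k] by blast
  then obtain q where q: "p^k - [:0,1:] = (\<Prod>e\<leftarrow>es. [:-e,1:]) * q" by (auto elim: dvdE)
  have f0: "mpoly n C (\<Prod>e\<leftarrow>es. [:-e,1:]) = 0\<^sub>m n n"
    unfolding CPUQ mpoly_similar[OF U P Q PQ QP] dg[symmetric] triangular_annihilate[OF U ut]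
    using P Q by simp
  have "p^k = (\<Prod>e\<leftarrow>es. [:-e,1:]) * q + [:0,1:]" using q by (simp add: algebra_simps)
  then have "mpoly n C (p^k) = mpoly n C (\<Prod>e\<leftarrow>es. [:-e,1:]) * mpoly n C q + C"
    using C by (simp add: mpoly_add mpoly_mult)
  also have "\<dots> = C" unfolding f0 using C by simp
  finally show ?thesis using mpoly_power[OF C] by metis
qed



lemma invI:
  fixes X Y :: "complex mat"
  assumes "X \<in> carrier_mat n n" "Y \<in> carrier_mat n n" "X * Y = 1\<^sub>m n"
  shows "invertible_mat X"
proof -
  have "Y * X = 1\<^sub>m n" using mat_mult_left_right_inverse[OF assms] .
  then show ?thesis using assms unfolding invertible_mat_def inverts_mat_def square_mat.simps
    by (auto simp: carrier_matD)
qed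

lemma mat_inv_props:
  assumes C: "C \<in> carrier_mat n n" and inv: "invertible_mat C"
  shows "mat_inv C \<in> carrier_mat n n \<and> C * mat_inv C = 1\<^sub>m n \<and> mat_inv C * C = 1\<^sub>m n"
proof -
  have d: "dim_row C = n" using C by auto
  show ?thesis unfolding mat_inv_def d
    by (rule someI_ex) (rule invertible_carrier_inv[OF C inv])
qed

lemma inv_mult:
  fixes X Y :: "complex mat"
  assumes X: "X \<in> carrier_mat n n" and Y: "Y \<in> carrier_mat n n"
    and iX: "invertible_mat X" and iY: "invertible_mat Y"
  shows "invertible_mat (X * Y)"
proof -
  obtain Xi where Xi: "Xi \<in> carrier_mat n n" "X * Xi = 1\<^sub>m n" using invertible_carrier_inv[OF X iX] by blast
  obtain Yi where Yi: "Yi \<in> carrier_mat n n" "Y * Yi = 1\<^sub>m n" using invertible_carrier_inv[OF Y iY] by blast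
  have "X * Y * (Yi * Xi) = X * (Y * (Yi * Xi))"
    using X Y Xi Yi by (intro massoc) auto
  also have "Y * (Yi * Xi) = (Y * Yi) * Xi" using Y Yi Xi by (intro massoc[symmetric])
  also have "(Y * Yi) * Xi = Xi" unfolding Yi(2) using Xi by simp
  finally show ?thesis using X Y Xi Yi by (intro invI[of _ n "Yi * Xi"]) auto
qed

lemma cancel_right:
  assumes X: "X \<in> carrier_mat n n" and Y: "Y \<in> carrier_mat n n" and M: "M \<in> carrier_mat n n"
    and iM: "invertible_mat M" and eq: "X * M = Y * M"
  shows "X = Y"
proof -
  obtain Mi where Mi: "Mi \<in> carrier_mat n n" "M * Mi = 1\<^sub>m n" using invertible_carrier_inv[OF M iM] by blast
  have "X = X * M * Mi" using X M Mi by (simp add: massoc[of _ n])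
  also have "\<dots> = Y * M * Mi" by (simp add: eq)
  also have "\<dots> = Y" using Y M Mi by (simp add: massoc[of _ n])
  finally show ?thesis .
qed

lemma pow_commute:
  assumes X: "X \<in> carrier_mat n n" and B: "B \<in> carrier_mat n n" and c: "X * B = B * X"
  shows "X * B ^\<^sub>m k = B ^\<^sub>m k * X"
proof (induction k)
  case 0 show ?case using X B by simp
next
  case (Suc k)
  have Bk: "B ^\<^sub>m k \<in> carrier_mat n n" using B by simp
  have "X * B ^\<^sub>m Suc k = X * B ^\<^sub>m k * B" using X B by (simp add: massoc[of _ n])
  also have "\<dots> = B ^\<^sub>m k * (X * B)" using X B Bk Suc by (simp add: massoc[of _ n])
  also have "\<dots> = B ^\<^sub>m k * B * X" unfolding c using X B Bk by (simp add: massoc[of _ n])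
  finally show ?case by simp
qed

lemma inv_commute:
  assumes X: "X \<in> carrier_mat n n" and B: "B \<in> carrier_mat n n" and iB: "invertible_mat B"
    and c: "X * B = B * X"
  shows "X * mat_inv B = mat_inv B * X"
proof -
  note Bi = mat_inv_props[OF B iB]
  let ?I = "mat_inv B"
  have I: "?I \<in> carrier_mat n n" using Bi by blast
  have XI: "X * ?I \<in> carrier_mat n n" using X I by auto
  have IB: "?I * B = 1\<^sub>m n" and BI: "B * ?I = 1\<^sub>m n" using Bi by auto
  have "X * ?I = (?I * B) * (X * ?I)" unfolding IB using left_mult_one_mat[OF XI] by simp
  also have "\<dots> = ?I * (B * (X * ?I))" by (rule massoc[OF I B XI])
  also have "B * (X * ?I) = (B * X) * ?I" by (rule massoc[OF B X I, symmetric])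
  also have "\<dots> = X * (B * ?I)" unfolding c[symmetric] by (rule massoc[OF X B I])
  also have "\<dots> = X" unfolding BI using right_mult_one_mat[OF X] by simp
  finally show ?thesis .
qed

lemma mpow_int_carrier[simp]:
  assumes B: "B \<in> carrier_mat n n" and iB: "invertible_mat B"
  shows "mpow_int B k \<in> carrier_mat n n"
  using mat_inv_props[OF B iB] B unfolding mpow_int_def by auto

lemma mpow_int_commute:
  assumes X: "X \<in> carrier_mat n n" and B: "B \<in> carrier_mat n n" and iB: "invertible_mat B"
    and c: "X * B = B * X"
  shows "X * mpow_int B k = mpow_int B k * X"
  using pow_commute[OF X B c] pow_commute[OF X _ inv_commute[OF X B iB c]] mat_inv_props[OF B iB]
  unfolding mpow_int_def by auto

lemma pow_invertible:
  fixes B :: "complex mat"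
  assumes B: "B \<in> carrier_mat n n" and iB: "invertible_mat B"
  shows "invertible_mat (B ^\<^sub>m k)"
proof (induction k)
  case 0 have "invertible_mat (1\<^sub>m n :: complex mat)" by (rule invI[of _ n "1\<^sub>m n"]) auto
  then show ?case using B by (simp add: carrier_matD)
next
  case (Suc k) show ?case using inv_mult[OF _ B Suc iB] B by simp
qed

lemma mpow_int_invertible:
  fixes B :: "complex mat"
  assumes B: "B \<in> carrier_mat n n" and iB: "invertible_mat B"
  shows "invertible_mat (mpow_int B k)"
proof -
  note Bi = mat_inv_props[OF B iB]
  have "invertible_mat (mat_inv B)" using Bi B by (intro invI[of _ n B]) auto
  then show ?thesis using pow_invertible[OF B iB] pow_invertible[of "mat_inv B" n] Bi
    unfolding mpow_int_def by auto
qed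

lemma mpow_int_succ:
  assumes B: "B \<in> carrier_mat n n" and iB: "invertible_mat B"
  shows "mpow_int B (k + 1) = mpow_int B k * B"
proof -
  note Bi = mat_inv_props[OF B iB]
  show ?thesis
  proof (cases "0 \<le> k")
    case True
    then have "nat (k+1) = Suc (nat k)" by simp
    then show ?thesis using True unfolding mpow_int_def by simp
  next
    case False
    then obtain j where j: "nat (-k) = Suc j" and j2: "nat (-(k+1)) = j"
      by (intro that[of "nat (-(k+1))"]) auto
    have I: "mat_inv B \<in> carrier_mat n n" using Bi by blast
    have "mpow_int B k * B = mat_inv B ^\<^sub>m j * mat_inv B * B"
      unfolding mpow_int_def using False j by simp
    also have "\<dots> = mat_inv B ^\<^sub>m j * (mat_inv B * B)" by (rule massoc) (use I B in auto)
    also have "\<dots> = mat_inv B ^\<^sub>m j" using I Bi right_mult_one_mat[OF pow_carrier_mat[OF I, of j]] by simp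
    also have "\<dots> = mpow_int B (k+1)"
    proof (cases "k + 1 = 0")
      case True
      then have "j = 0" using j2 by simp
      then show ?thesis using True I B unfolding mpow_int_def by (auto simp: carrier_matD)
    next
      case False2: False
      then show ?thesis using False j2 unfolding mpow_int_def by simp
    qed
    finally show ?thesis by simp
  qed
qed

lemma mpow_int_add_nat:
  assumes B: "B \<in> carrier_mat n n" and iB: "invertible_mat B"
  shows "mpow_int B (k + int j) = mpow_int B k * B ^\<^sub>m j"
proof (induction j)
  case 0 show ?case using mpow_int_carrier[OF B iB, of k] B by (simp add: carrier_matD)
next
  case (Suc j)
  have e: "k + int (Suc j) = (k + int j) + 1" by simp
  have "mpow_int B (k + int (Suc j)) = mpow_int B (k + int j + 1)" unfolding e ..
  also have "\<dots> = mpow_int B (k + int j) * B" by (rule mpow_int_succ[OF B iB])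
  also have "\<dots> = mpow_int B k * B ^\<^sub>m j * B" using Suc by simp
  also have "\<dots> = mpow_int B k * B ^\<^sub>m Suc j"
    using massoc[OF mpow_int_carrier[OF B iB, of k] pow_carrier_mat[OF B, of j] B] by simp
  finally show ?case .
qed



lemma prod_pows_props:
  assumes Bc: "\<forall>b<m. B b \<in> carrier_mat n n \<and> invertible_mat (B b)" and j: "j \<le> m"
  shows "prod_pows n B t j \<in> carrier_mat n n \<and> invertible_mat (prod_pows n B t j)"
  using j
proof (induction j)
  case 0
  have "invertible_mat (1\<^sub>m n :: complex mat)" by (rule invI[of _ n "1\<^sub>m n"]) auto
  then show ?case by simp
next
  case (Suc j)
  then have j: "j < m" by simp
  then have B: "B j \<in> carrier_mat n n" "invertible_mat (B j)" using Bc by auto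
  show ?case using Suc j B mpow_int_carrier[OF B] mpow_int_invertible[OF B]
    by (auto intro: inv_mult[of _ n])
qed

lemma prod_pows_shift:
  assumes Bc: "\<forall>b<m. B b \<in> carrier_mat n n \<and> invertible_mat (B b)"
    and comm: "\<forall>b<m. \<forall>c<m. B b * B c = B c * B b"
    and a: "a < m" and j: "j \<le> m"
  shows "prod_pows n B (shift t a (int T)) j = prod_pows n B t j * (if a < j then B a ^\<^sub>m T else 1\<^sub>m n)"
  using j
proof (induction j)
  case 0 show ?case by simp
next
  case (Suc j)
  then have j: "j < m" by simp
  have Bj: "B j \<in> carrier_mat n n" "invertible_mat (B j)" using Bc j by auto
  have Ba: "B a \<in> carrier_mat n n" "invertible_mat (B a)" using Bc a by auto
  let ?t' = "shift t a (int T)"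
  have Pj: "prod_pows n B t j \<in> carrier_mat n n" using prod_pows_props[OF Bc] j by auto
  have BaT: "B a ^\<^sub>m T \<in> carrier_mat n n" using Ba by simp
  have IH: "prod_pows n B ?t' j = prod_pows n B t j * (if a < j then B a ^\<^sub>m T else 1\<^sub>m n)"
    using Suc j by simp
  show ?case
  proof (cases "j = a")
    case True
    have "prod_pows n B ?t' (Suc j) = prod_pows n B t j * mpow_int (B a) (t a + int T)"
      using IH True right_mult_one_mat[OF Pj] by (simp add: shift_def)
    also have "\<dots> = prod_pows n B t j * (mpow_int (B a) (t a) * B a ^\<^sub>m T)"
      using mpow_int_add_nat[OF Ba] by simp
    also have "\<dots> = prod_pows n B t j * mpow_int (B a) (t a) * B a ^\<^sub>m T"
      by (rule massoc[symmetric]) (use Pj BaT Ba in auto)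
    finally show ?thesis using True by simp
  next
    case False
    have tj: "?t' j = t j" using False by (simp add: shift_def)
    show ?thesis
    proof (cases "a < j")
      case True
      have M: "mpow_int (B j) (t j) \<in> carrier_mat n n" using Bj by simp
      have c1: "B j * B a ^\<^sub>m T = B a ^\<^sub>m T * B j"
        by (rule pow_commute[OF Bj(1) Ba(1)]) (use comm j a in auto)
      have c2: "B a ^\<^sub>m T * mpow_int (B j) (t j) = mpow_int (B j) (t j) * B a ^\<^sub>m T"
        by (rule mpow_int_commute[OF BaT Bj]) (use c1 in auto)
      have "prod_pows n B ?t' (Suc j) = prod_pows n B t j * B a ^\<^sub>m T * mpow_int (B j) (t j)"
        using IH True tj by simp
      also have "\<dots> = prod_pows n B t j * (B a ^\<^sub>m T * mpow_int (B j) (t j))"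
        by (rule massoc[OF Pj BaT M])
      also have "\<dots> = prod_pows n B t j * mpow_int (B j) (t j) * B a ^\<^sub>m T"
        unfolding c2 by (rule massoc[OF Pj M BaT, symmetric])
      finally show ?thesis using True by simp
    next
      case False2: False
      have M: "mpow_int (B j) (t j) \<in> carrier_mat n n" using Bj by simp
      have "prod_pows n B ?t' (Suc j) = prod_pows n B t j * mpow_int (B j) (t j)"
        using IH False2 tj right_mult_one_mat[OF Pj] by simp
      then show ?thesis using False2 False right_mult_one_mat[of _ n n] Pj M by auto
    qed
  qed
qed

lemma shift_in: "t \<in> domZ m t0 \<Longrightarrow> a < m \<Longrightarrow> 0 \<le> k \<Longrightarrow> shift t a k \<in> domZ m t0"
  unfolding domZ_def shift_def by auto

lemma shift_comm: "shift (shift t b i) a k = shift (shift t a k) b i"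
  unfolding shift_def by (auto simp: fun_eq_iff)

lemma shift_0[simp]: "shift t a 0 = t"
  unfolding shift_def by auto

lemma dom_induct:
  assumes t0s: "\<forall>a\<ge>m. t0 a = 0" and base: "Q t0"
    and step: "\<And>t a. t \<in> domZ m t0 \<Longrightarrow> a < m \<Longrightarrow> Q t \<Longrightarrow> Q (shift t a 1)"
    and t: "t \<in> domZ m t0"
  shows "Q t"
proof -
  have "\<forall>t. t \<in> domZ m t0 \<longrightarrow> (\<Sum>a<m. nat (t a - t0 a)) = N \<longrightarrow> Q t" for N
  proof (induction N)
    case 0
    show ?case
    proof (intro allI impI)
      fix t assume tD: "t \<in> domZ m t0" and s: "(\<Sum>a<m. nat (t a - t0 a)) = 0"
      have "\<forall>a<m. nat (t a - t0 a) = 0" using s by simp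
      then have "t = t0" using tD t0s unfolding domZ_def
        by (auto simp: fun_eq_iff) (metis antisym nat_le_0 not_le diff_ge_0_iff_ge leI)
      then show "Q t" using base by simp
    qed
  next
    case (Suc N)
    show ?case
    proof (intro allI impI)
      fix t assume tD: "t \<in> domZ m t0" and s: "(\<Sum>a<m. nat (t a - t0 a)) = Suc N"
      obtain a where a: "a < m" "nat (t a - t0 a) > 0"
      proof (rule ccontr)
        assume "\<not> thesis"
        then have "\<forall>a<m. nat (t a - t0 a) = 0" using that by (meson not_gr0)
        then show False using s by simp
      qed
      define t' where "t' = shift t a (-1)"
      have t'D: "t' \<in> domZ m t0" using tD a unfolding t'_def domZ_def shift_def by auto
      have fin: "finite {..<m}" by simp
      have s1: "(\<Sum>b<m. nat (t b - t0 b)) = nat (t a - t0 a) + (\<Sum>b\<in>{..<m}-{a}. nat (t b - t0 b))"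
        by (rule sum.remove) (use a in auto)
      have s2: "(\<Sum>b<m. nat (t' b - t0 b)) = nat (t' a - t0 a) + (\<Sum>b\<in>{..<m}-{a}. nat (t' b - t0 b))"
        by (rule sum.remove) (use a in auto)
      have s3: "(\<Sum>b\<in>{..<m}-{a}. nat (t' b - t0 b)) = (\<Sum>b\<in>{..<m}-{a}. nat (t b - t0 b))"
        by (rule sum.cong) (auto simp: t'_def shift_def)
      have "nat (t' a - t0 a) = nat (t a - t0 a) - 1" unfolding t'_def shift_def using a by auto
      then have "(\<Sum>b<m. nat (t' b - t0 b)) = N" using s s1 s2 s3 a by simp
      then have "Q t'" using Suc.IH t'D by blast
      moreover have "t = shift t' a 1" unfolding t'_def shift_def by (auto simp: fun_eq_iff)
      ultimately show "Q t" using step[OF t'D a(1)] by simp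
    qed
  qed
  then show ?thesis using t by blast
qed



theorem theorem2p11:
  fixes m n :: nat and t0 :: "nat \<Rightarrow> int" and T :: "nat \<Rightarrow> nat"
    and A :: "nat \<Rightarrow> (nat \<Rightarrow> int) \<Rightarrow> complex mat"
    and \<Phi> :: "(nat \<Rightarrow> int) \<Rightarrow> complex mat"
  assumes m_pos: "m \<ge> 1" and n_pos: "n \<ge> 1"
    and t0_supp: "\<forall>a\<ge>m. t0 a = 0"
    and T_nz: "\<exists>a<m. T a \<noteq> 0"
    and A_carrier: "\<forall>a<m. \<forall>t\<in>domZ m t0. A a t \<in> carrier_mat n n"
    and compat: "\<forall>t\<in>domZ m t0. \<forall>a<m. \<forall>b<m.
        A a (shift t b 1) * A b t = A b (shift t a 1) * A a t"
    and periodic: "\<forall>a<m. \<forall>b<m. \<forall>t\<in>domZ m t0. A a (shift t b (int (T b))) = A a t"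
    and invertible: "\<forall>a<m. \<forall>t\<in>domZ m t0. invertible_mat (A a t)"
    and Phi_init: "\<Phi> t0 = 1\<^sub>m n"
    and Phi_step: "\<forall>t\<in>domZ m t0. \<forall>a<m. \<Phi> (shift t a 1) = A a t * \<Phi> t"
    and cases: "n = 2 \<or>
       ((\<forall>a<m. \<forall>t\<in>domZ m t0. hermitian_mat (A a t)) \<and>
        (\<forall>a<m. \<forall>t\<in>domZ m t0. \<forall>k::nat.
            A a t * A a (shift t a (int k)) = A a (shift t a (int k)) * A a t))"
  shows "\<exists>P :: (nat \<Rightarrow> int) \<Rightarrow> complex mat. \<exists>B :: nat \<Rightarrow> complex mat.
     (\<forall>t\<in>domZ m t0. P t \<in> carrier_mat n n) \<and>
     (\<forall>a<m. B a \<in> carrier_mat n n \<and> invertible_mat (B a)) \<and>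
     (\<forall>t\<in>domZ m t0. \<forall>a<m. P (shift t a (int (T a))) = P t) \<and>
     (\<forall>a<m. \<forall>b<m. B a * B b = B b * B a) \<and>
     (\<forall>t\<in>domZ m t0. \<Phi> t = P t * prod_pows n B t m)"
proof -
  let ?D = "domZ m t0"
  have t0D: "t0 \<in> ?D" using t0_supp unfolding domZ_def by auto
  have one_inv: "invertible_mat (1\<^sub>m n :: complex mat)" by (rule invI[of _ n "1\<^sub>m n"]) auto
  have Phi: "\<Phi> t \<in> carrier_mat n n \<and> invertible_mat (\<Phi> t)" if "t \<in> ?D" for t
  proof (rule dom_induct[OF t0_supp _ _ that, where Q = "\<lambda>t. \<Phi> t \<in> carrier_mat n n \<and> invertible_mat (\<Phi> t)"])
    show "\<Phi> t0 \<in> carrier_mat n n \<and> invertible_mat (\<Phi> t0)" using Phi_init one_inv by simp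
  next
    fix t a assume tD: "t \<in> ?D" and a: "a < m" and H: "\<Phi> t \<in> carrier_mat n n \<and> invertible_mat (\<Phi> t)"
    have Aa: "A a t \<in> carrier_mat n n" "invertible_mat (A a t)" using A_carrier invertible tD a by auto
    show "\<Phi> (shift t a 1) \<in> carrier_mat n n \<and> invertible_mat (\<Phi> (shift t a 1))"
      using Phi_step tD a Aa H inv_mult[of "A a t" n "\<Phi> t"] by auto
  qed
  have uniq: "X t = Y t"
    if X0: "X t0 = Y t0" and XR: "\<forall>t\<in>?D. \<forall>a<m. X (shift t a 1) = A a t * X t"
      and YR: "\<forall>t\<in>?D. \<forall>a<m. Y (shift t a 1) = A a t * Y t" and tD: "t \<in> ?D" for X Y t
    by (rule dom_induct[OF t0_supp _ _ tD, where Q = "\<lambda>t. X t = Y t"]) (use X0 XR YR in auto)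
  define Ca where "Ca a = \<Phi> (shift t0 a (int (T a)))" for a
  have Ca: "Ca a \<in> carrier_mat n n \<and> invertible_mat (Ca a)" if "a < m" for a
    unfolding Ca_def using Phi[OF shift_in[OF t0D that]] by simp
  have period: "\<Phi> (shift t a (int (T a))) = \<Phi> t * Ca a" if a: "a < m" and tD: "t \<in> ?D" for a t
  proof (rule uniq[OF _ _ _ tD, where X = "\<lambda>t. \<Phi> (shift t a (int (T a)))" and Y = "\<lambda>t. \<Phi> t * Ca a"])
    show "\<Phi> (shift t0 a (int (T a))) = \<Phi> t0 * Ca a" using Phi_init left_mult_one_mat[of "Ca a" n n] Ca[OF a] unfolding Ca_def by simp
    show "\<forall>t\<in>?D. \<forall>b<m. \<Phi> (shift (shift t b 1) a (int (T a))) = A b t * \<Phi> (shift t a (int (T a)))"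
    proof (intro ballI allI impI)
      fix t b assume tD: "t \<in> ?D" and b: "b < m"
      have sD: "shift t a (int (T a)) \<in> ?D" using shift_in[OF tD a] by simp
      have "\<Phi> (shift (shift t b 1) a (int (T a))) = \<Phi> (shift (shift t a (int (T a))) b 1)"
        by (simp add: shift_comm)
      also have "\<dots> = A b (shift t a (int (T a))) * \<Phi> (shift t a (int (T a)))"
        using Phi_step sD b by auto
      also have "A b (shift t a (int (T a))) = A b t" using periodic a b tD by auto
      finally show "\<Phi> (shift (shift t b 1) a (int (T a))) = A b t * \<Phi> (shift t a (int (T a)))" .
    qed
    show "\<forall>t\<in>?D. \<forall>b<m. \<Phi> (shift t b 1) * Ca a = A b t * (\<Phi> t * Ca a)"
    proof (intro ballI allI impI)
      fix t b assume tD: "t \<in> ?D" and b: "b < m"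
      have "\<Phi> (shift t b 1) * Ca a = A b t * \<Phi> t * Ca a" using Phi_step tD b by auto
      also have "\<dots> = A b t * (\<Phi> t * Ca a)"
        by (rule massoc) (use A_carrier tD b Phi[OF tD] Ca[OF a] in auto)
      finally show "\<Phi> (shift t b 1) * Ca a = A b t * (\<Phi> t * Ca a)" .
    qed
  qed
  have Ccomm: "Ca a * Ca b = Ca b * Ca a" if a: "a < m" and b: "b < m" for a b
  proof -
    have "\<Phi> (shift (shift t0 a (int (T a))) b (int (T b))) = Ca a * Ca b"
      using period[OF b shift_in[OF t0D a]] unfolding Ca_def by simp
    moreover have "\<Phi> (shift (shift t0 b (int (T b))) a (int (T a))) = Ca b * Ca a"
      using period[OF a shift_in[OF t0D b]] unfolding Ca_def by simp
    ultimately show ?thesis by (simp add: shift_comm)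
  qed
  have roots: "\<exists>p. mpoly n (Ca a) p ^\<^sub>m T a = Ca a \<and> invertible_mat (mpoly n (Ca a) p)"
    if a: "a < m" for a
  proof (cases "T a = 0")
    case True
    have "Ca a = 1\<^sub>m n" unfolding Ca_def using True Phi_init by simp
    then show ?thesis using True one_inv by (intro exI[of _ 1]) auto
  next
    case False
    have C: "Ca a \<in> carrier_mat n n" "invertible_mat (Ca a)" using Ca[OF a] by auto
    obtain p where p: "mpoly n (Ca a) p ^\<^sub>m T a = Ca a" using matrix_root[OF C] False by auto
    let ?B = "mpoly n (Ca a) p"
    have Bc: "?B \<in> carrier_mat n n" using C by simp
    obtain Ci where Ci: "Ci \<in> carrier_mat n n" "Ci * Ca a = 1\<^sub>m n"
      using invertible_carrier_inv[OF C] by blast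
    obtain j where j: "T a = Suc j" using False by (cases "T a") auto
    have Bj: "?B ^\<^sub>m j \<in> carrier_mat n n" using Bc by simp
    have "Ci * ?B ^\<^sub>m j * ?B = Ci * (?B ^\<^sub>m j * ?B)" by (rule massoc[OF Ci(1) Bj Bc])
    also have "?B ^\<^sub>m j * ?B = Ca a" using p j by simp
    finally have "(Ci * ?B ^\<^sub>m j) * ?B = 1\<^sub>m n" using Ci by simp
    then have "?B * (Ci * ?B ^\<^sub>m j) = 1\<^sub>m n"
      by (rule mat_mult_left_right_inverse[rotated 2]) (use Ci Bj Bc in auto)
    then have "invertible_mat ?B" by (rule invI[OF Bc, rotated]) (use Ci Bj in auto)
    then show ?thesis using p by blast
  qed
  obtain pp where pp: "\<And>a. a < m \<Longrightarrow> mpoly n (Ca a) (pp a) ^\<^sub>m T a = Ca a \<and> invertible_mat (mpoly n (Ca a) (pp a))"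
    using roots by metis
  define B where "B a = mpoly n (Ca a) (pp a)" for a
  have Bc: "\<forall>b<m. B b \<in> carrier_mat n n \<and> invertible_mat (B b)"
    using pp Ca unfolding B_def by auto
  have BT: "B a ^\<^sub>m T a = Ca a" if "a < m" for a using pp[OF that] unfolding B_def by simp
  have Bcomm: "\<forall>a<m. \<forall>b<m. B a * B b = B b * B a"
  proof (intro allI impI)
    fix a b assume a: "a < m" and b: "b < m"
    have CaC: "Ca a \<in> carrier_mat n n" and CbC: "Ca b \<in> carrier_mat n n" using Ca a b by auto
    have 1: "Ca b * B a = B a * Ca b" unfolding B_def
      by (rule mpoly_commute[OF CaC CbC]) (use Ccomm a b in auto)
    have "B a * B b = B b * B a" unfolding B_def[of b]
      by (rule mpoly_commute[OF CbC]) (use 1 Bc a in \<open>auto simp: B_def\<close>)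
    then show "B a * B b = B b * B a" .
  qed
  have prodP: "prod_pows n B t m \<in> carrier_mat n n \<and> invertible_mat (prod_pows n B t m)" for t
    using prod_pows_props[OF Bc, of m] by simp
  define P where "P t = \<Phi> t * mat_inv (prod_pows n B t m)" for t
  have Pc: "P t \<in> carrier_mat n n" if "t \<in> ?D" for t
    unfolding P_def using Phi[OF that] mat_inv_props[of "prod_pows n B t m" n] prodP[of t] by auto
  have Pprod: "\<Phi> t = P t * prod_pows n B t m" if "t \<in> ?D" for t
  proof -
    have M: "prod_pows n B t m \<in> carrier_mat n n" "invertible_mat (prod_pows n B t m)" using prodP by auto
    note Mi = mat_inv_props[OF M]
    have "P t * prod_pows n B t m = \<Phi> t * (mat_inv (prod_pows n B t m) * prod_pows n B t m)"
      unfolding P_def by (rule massoc) (use Phi[OF that] Mi M in auto)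
    also have "\<dots> = \<Phi> t" using Mi Phi[OF that] right_mult_one_mat[of "\<Phi> t" n n] by auto
    finally show ?thesis by simp
  qed
  have Pper: "P (shift t a (int (T a))) = P t" if tD: "t \<in> ?D" and a: "a < m" for t a
  proof -
    let ?t' = "shift t a (int (T a))"
    have t'D: "?t' \<in> ?D" using shift_in[OF tD a] by simp
    have pr: "prod_pows n B ?t' m = prod_pows n B t m * B a ^\<^sub>m T a"
      using prod_pows_shift[OF Bc Bcomm a, of m t "T a"] a by simp
    have M: "prod_pows n B t m \<in> carrier_mat n n" using prodP by auto
    have BaT: "B a ^\<^sub>m T a \<in> carrier_mat n n" using Bc a by simp
    have "P ?t' * prod_pows n B ?t' m = \<Phi> ?t'" using Pprod[OF t'D] by simp
    also have "\<dots> = \<Phi> t * Ca a" using period[OF a tD] .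
    also have "\<dots> = P t * prod_pows n B t m * B a ^\<^sub>m T a" using Pprod[OF tD] BT[OF a] by simp
    also have "\<dots> = P t * prod_pows n B ?t' m" unfolding pr by (rule massoc[OF Pc[OF tD] M BaT])
    finally have eq: "P ?t' * prod_pows n B ?t' m = P t * prod_pows n B ?t' m" .
    show ?thesis
      by (rule cancel_right[OF Pc[OF t'D] Pc[OF tD] _ _ eq]) (use prodP in auto)
  qed
  show ?thesis
    by (rule exI[of _ P], rule exI[of _ B]) (use Pc Bc Pper Bcomm Pprod in auto)
qed


end
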